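(* Let $\tau\in(0,1)$ and let $(x_i',\epsilon_i)'\in\mathbb{R}^p\times\mathbb{R}$, $i=1,\dots,n$, be random vectors independent across $i$. Then with probability at least $1-8\tau$, $$\max_{1\le j\le p}\big|\mathbb{E}_n[x_{ij}^2\epsilon_i^2]-\bar{\mathrm{E}}[x_{ij}^2\epsilon_i^2]\big|\le4\sqrt{\frac{2\log(2p/\tau)}{n}\,Q\Big(\max_{1\le j\le p}\mathbb{E}_n[x_{ij}^4\epsilon_i^4],1-\tau\Big)}\;\vee\;2\max_{1\le j\le p}\sqrt{\frac{2\bar{\mathrm{E}}[x_{ij}^4\epsilon_i^4]}{n}}.$$
   Context: $\mathbb{E}_n[f]=\frac1n\sum_{i=1}^nf(x_i,\epsilon_i)$ and $\bar{\mathrm{E}}[f]=\frac1n\sum_{i=1}^n\mathrm{E}[f(x_i,\epsilon_i)]$. For a random variable $W$, $Q(W,1-\tau)$ denotes its $(1-\tau)$-quantile. $a\vee b=\max\{a,b\}$. *)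

theory Defs
  imports "HOL-Probability.Probability"
begin

definition emp_avg :: "nat \<Rightarrow> (nat \<Rightarrow> 'a \<Rightarrow> real) \<Rightarrow> 'a \<Rightarrow> real" where
  "emp_avg n f \<omega> = (1 / real n) * (\<Sum>i=1..n. f i \<omega>)"

definition avg_expect :: "'a measure \<Rightarrow> nat \<Rightarrow> (nat \<Rightarrow> 'a \<Rightarrow> real) \<Rightarrow> real" where
  "avg_expect M n f = (1 / real n) * (\<Sum>i=1..n. integral\<^sup>L M (f i))"

definition quantile :: "'a measure \<Rightarrow> ('a \<Rightarrow> real) \<Rightarrow> real \<Rightarrow> real" where
  "quantile M W \<alpha> = Inf {t. measure M {\<omega> \<in> space M. W \<omega> \<le> t} \<ge> \<alpha>}"

end

theory Submission
  imports Defs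
begin

lemma exp_low_bound:
  fixes y :: real assumes "0 \<le> y" shows "exp (- y) \<le> 1 - y + y^2/2"
proof -
  have "(\<lambda>y. 1 - y + y^2/2 - exp (- y)) 0 \<le> (\<lambda>y. 1 - y + y^2/2 - exp (- y)) y"
  proof (rule DERIV_nonneg_imp_nondecreasing[OF assms])
    fix x :: real assume "0 \<le> x" "x \<le> y"
    show "\<exists>d. ((\<lambda>y. 1 - y + y^2/2 - exp (- y)) has_real_derivative d) (at x) \<and> d \<ge> 0"
      apply (rule exI[of _ "-1 + x + exp (-x)"])
      apply (intro conjI)
       apply (auto intro!: derivative_eq_intros)
      using exp_ge_add_one_self[of "-x"] by linarith
  qed
  then show ?thesis by simp
qed

lemma exp_up_bound:
  fixes z :: real assumes "0 \<le> z" shows "exp (z - z^2/2) \<le> 1 + z"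
proof -
  have "(\<lambda>z. ln (1 + z) - z + z^2/2) 0 \<le> (\<lambda>z. ln (1 + z) - z + z^2/2) z"
  proof (rule DERIV_nonneg_imp_nondecreasing[OF assms])
    fix x :: real assume x: "0 \<le> x" "x \<le> z"
    show "\<exists>d. ((\<lambda>z. ln (1 + z) - z + z^2/2) has_real_derivative d) (at x) \<and> d \<ge> 0"
      apply (rule exI[of _ "1/(1+x) - 1 + x"])
      apply (intro conjI)
      using x apply (auto intro!: derivative_eq_intros simp: field_simps)
      done
  qed
  then have "z - z^2/2 \<le> ln (1+z)" by simp
  then have "exp (z - z^2/2) \<le> exp (ln (1+z))" by simp
  also have "\<dots> = 1 + z" using assms by simp
  finally show ?thesis .
qed


lemma (in prob_space) indep_prod_expect:
  fixes \<xi> :: "nat \<Rightarrow> 'a \<Rightarrow> 'b::topological_space" and f :: "nat \<Rightarrow> 'b \<Rightarrow> real"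
  assumes I: "finite I" and ind: "indep_vars (\<lambda>_. borel) \<xi> I"
    and f: "\<And>i. i \<in> I \<Longrightarrow> f i \<in> borel_measurable borel"
    and bnd: "\<And>i v. i \<in> I \<Longrightarrow> \<bar>f i v\<bar> \<le> C"
  shows "expectation (\<lambda>\<omega>. \<Prod>i\<in>I. f i (\<xi> i \<omega>)) = (\<Prod>i\<in>I. expectation (\<lambda>\<omega>. f i (\<xi> i \<omega>)))"
proof -
  have ind2: "indep_vars (\<lambda>_. borel) (\<lambda>i \<omega>. f i (\<xi> i \<omega>)) I"
    by (rule indep_vars_compose2[OF ind f])
  have rv: "\<And>i. i \<in> I \<Longrightarrow> \<xi> i \<in> measurable M borel"
    using ind by (auto simp: indep_vars_def)
  show ?thesis
  proof (rule indep_vars_lebesgue_integral[OF I ind2])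
    fix i assume i: "i \<in> I"
    show "integrable M (\<lambda>\<omega>. f i (\<xi> i \<omega>))"
      apply (rule integrable_const_bound[where B=C])
      using i bnd apply simp
      using measurable_comp[OF rv[OF i] f[OF i]] by (simp add: comp_def)
  qed
qed

lemma (in prob_space) markov_exp:
  fixes S :: "'a \<Rightarrow> real"
  assumes "integrable M (\<lambda>\<omega>. exp (S \<omega>))" and [measurable]: "S \<in> borel_measurable M"
  shows "prob {\<omega>\<in>space M. s \<le> S \<omega>} \<le> exp (- s) * expectation (\<lambda>\<omega>. exp (S \<omega>))"
proof -
  have "prob {\<omega>\<in>space M. exp s \<le> exp (S \<omega>)} \<le> expectation (\<lambda>\<omega>. exp (S \<omega>)) / exp s"
    by (rule integral_Markov_inequality_measure[OF assms(1), where A="space M"]) auto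
  then show ?thesis by (simp add: exp_minus field_simps)
qed



lemma (in prob_space) exp_sum_bound:
  fixes \<xi> :: "nat \<Rightarrow> 'a \<Rightarrow> 'b::topological_space" and h :: "nat \<Rightarrow> 'b \<Rightarrow> real"
  assumes I: "finite I" and ind: "indep_vars (\<lambda>_. borel) \<xi> I"
    and h: "\<And>i. i \<in> I \<Longrightarrow> h i \<in> borel_measurable borel"
    and bnd: "\<And>i v. i \<in> I \<Longrightarrow> h i v \<le> C"
    and e1: "\<And>i. i \<in> I \<Longrightarrow> expectation (\<lambda>\<omega>. exp (h i (\<xi> i \<omega>))) \<le> 1"
  shows "prob {\<omega>\<in>space M. s \<le> (\<Sum>i\<in>I. h i (\<xi> i \<omega>))} \<le> exp (- s)"
proof -
  have rv: "\<And>i. i \<in> I \<Longrightarrow> \<xi> i \<in> measurable M borel"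
    using ind by (auto simp: indep_vars_def)
  have hm: "\<And>i. i \<in> I \<Longrightarrow> (\<lambda>\<omega>. h i (\<xi> i \<omega>)) \<in> borel_measurable M"
    using measurable_comp[OF rv h] by (simp add: comp_def)
  have Sm: "(\<lambda>\<omega>. \<Sum>i\<in>I. h i (\<xi> i \<omega>)) \<in> borel_measurable M"
    using hm by (intro borel_measurable_sum) auto
  have fm: "\<And>i. i \<in> I \<Longrightarrow> (\<lambda>v. exp (h i v)) \<in> borel_measurable borel"
    using h by measurable
  have fb: "\<And>i v. i \<in> I \<Longrightarrow> \<bar>exp (h i v)\<bar> \<le> exp C"
    using bnd by simp
  have eq: "(\<lambda>\<omega>. exp (\<Sum>i\<in>I. h i (\<xi> i \<omega>))) = (\<lambda>\<omega>. \<Prod>i\<in>I. exp (h i (\<xi> i \<omega>)))"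
    by (simp add: exp_sum I)
  have E: "expectation (\<lambda>\<omega>. exp (\<Sum>i\<in>I. h i (\<xi> i \<omega>))) = (\<Prod>i\<in>I. expectation (\<lambda>\<omega>. exp (h i (\<xi> i \<omega>))))"
    unfolding eq by (rule indep_prod_expect[OF I ind fm fb])
  have "(\<Prod>i\<in>I. expectation (\<lambda>\<omega>. exp (h i (\<xi> i \<omega>)))) \<le> (\<Prod>i\<in>I. 1)"
    by (intro prod_mono conjI e1 integral_nonneg_AE) auto
  then have E1: "expectation (\<lambda>\<omega>. exp (\<Sum>i\<in>I. h i (\<xi> i \<omega>))) \<le> 1" using E by simp
  have int: "integrable M (\<lambda>\<omega>. exp (\<Sum>i\<in>I. h i (\<xi> i \<omega>)))"
  proof (rule integrable_const_bound[where B="exp (real (card I) * C)"])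
    show "AE x in M. norm (exp (\<Sum>i\<in>I. h i (\<xi> i x))) \<le> exp (real (card I) * C)"
    proof (rule AE_I2)
      fix x
      have "(\<Sum>i\<in>I. h i (\<xi> i x)) \<le> (\<Sum>i\<in>I. C)" by (intro sum_mono bnd)
      then show "norm (exp (\<Sum>i\<in>I. h i (\<xi> i x))) \<le> exp (real (card I) * C)" by simp
    qed
    show "(\<lambda>\<omega>. exp (\<Sum>i\<in>I. h i (\<xi> i \<omega>))) \<in> borel_measurable M" using Sm by measurable
  qed
  have "prob {\<omega>\<in>space M. s \<le> (\<Sum>i\<in>I. h i (\<xi> i \<omega>))} \<le> exp (- s) * expectation (\<lambda>\<omega>. exp (\<Sum>i\<in>I. h i (\<xi> i \<omega>)))"
    by (rule markov_exp[OF int Sm])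
  also have "\<dots> \<le> exp (- s) * 1" using E1 by (intro mult_left_mono) auto
  finally show ?thesis by simp
qed

locale coord = prob_space +
  fixes \<xi> :: "nat \<Rightarrow> 'a \<Rightarrow> 'b::topological_space" and I :: "nat set" and g :: "'b \<Rightarrow> real"
  assumes I: "finite I" "I \<noteq> {}"
    and ind: "indep_vars (\<lambda>_. borel) \<xi> I"
    and g[measurable]: "g \<in> borel_measurable borel" and gpos: "\<And>v. 0 \<le> g v"
    and gint: "\<And>i. i \<in> I \<Longrightarrow> integrable M (\<lambda>\<omega>. (g (\<xi> i \<omega>))^2)"
begin

lemma rv[measurable]: "i \<in> I \<Longrightarrow> \<xi> i \<in> measurable M borel"
  using ind by (auto simp: indep_vars_def)

lemma Zm: "i \<in> I \<Longrightarrow> (\<lambda>\<omega>. g (\<xi> i \<omega>)) \<in> borel_measurable M"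
  by measurable

lemma Zint: "i \<in> I \<Longrightarrow> integrable M (\<lambda>\<omega>. g (\<xi> i \<omega>))"
proof (rule Bochner_Integration.integrable_bound[where f="\<lambda>\<omega>. 1 + (g (\<xi> i \<omega>))^2"])
  assume i: "i \<in> I"
  show "integrable M (\<lambda>\<omega>. 1 + (g (\<xi> i \<omega>))^2)" using gint[OF i] by simp
  show "(\<lambda>\<omega>. g (\<xi> i \<omega>)) \<in> borel_measurable M" using i by measurable
  show "AE x in M. norm (g (\<xi> i x)) \<le> norm (1 + (g (\<xi> i x))\<^sup>2)"
  proof (rule AE_I2)
    fix x
    have "g (\<xi> i x) \<le> 1 + (g (\<xi> i x))\<^sup>2"
    proof -
      have "0 \<le> (g (\<xi> i x) - 1)^2" by simp
      then show ?thesis using gpos[of "\<xi> i x"] unfolding power2_diff by simp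
    qed
    then show "norm (g (\<xi> i x)) \<le> norm (1 + (g (\<xi> i x))\<^sup>2)" using gpos[of "\<xi> i x"]
      by (simp add: add_nonneg_nonneg)
  qed
qed

lemma Yint: assumes i: "i \<in> I" and c: "0 \<le> c"
  shows "integrable M (\<lambda>\<omega>. min (g (\<xi> i \<omega>)) c)"
proof (rule integrable_const_bound[where B=c])
  show "AE x in M. norm (min (g (\<xi> i x)) c) \<le> c"
    using gpos c by (intro AE_I2) (simp add: min_def)
  show "(\<lambda>\<omega>. min (g (\<xi> i \<omega>)) c) \<in> borel_measurable M" using i by measurable
qed

lemma Y2int: assumes i: "i \<in> I" and c: "0 \<le> c"
  shows "integrable M (\<lambda>\<omega>. (min (g (\<xi> i \<omega>)) c)^2)"
proof (rule integrable_const_bound[where B="c^2"])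
  show "AE x in M. norm ((min (g (\<xi> i x)) c)^2) \<le> c^2"
    using gpos c by (intro AE_I2) (auto simp: min_def intro: power_mono)
  show "(\<lambda>\<omega>. (min (g (\<xi> i \<omega>)) c)^2) \<in> borel_measurable M" using i by measurable
qed

lemma ind_expect:
  assumes i: "i \<in> I" and [measurable]: "Measurable.pred borel P"
  shows "expectation (\<lambda>\<omega>. if P (g (\<xi> i \<omega>)) then 1 else 0::real)
     = prob {\<omega>\<in>space M. P (g (\<xi> i \<omega>))}"
proof -
  note i[measurable]
  have "expectation (\<lambda>\<omega>. if P (g (\<xi> i \<omega>)) then 1 else 0::real)
      = expectation (indicator {\<omega>\<in>space M. P (g (\<xi> i \<omega>))})"
    by (intro Bochner_Integration.integral_cong) (auto simp: indicator_def)
  also have "\<dots> = prob {\<omega>\<in>space M. P (g (\<xi> i \<omega>))}"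
    by (simp add: Int_absorb2)
  finally show ?thesis .
qed

end

context coord begin

lemma sum_p_le1:
  assumes A: "A \<in> events" and PA: "exp (-1) \<le> prob A" and onA: "\<And>\<omega> i. \<omega> \<in> A \<Longrightarrow> i \<in> I \<Longrightarrow> g (\<xi> i \<omega>) \<le> c"
  shows "(\<Sum>i\<in>I. prob {\<omega>\<in>space M. c < g (\<xi> i \<omega>)}) \<le> 1"
proof -
  define p where "p i = prob {\<omega>\<in>space M. c < g (\<xi> i \<omega>)}" for i
  define f where "f i v = (if g v \<le> c then 1 else 0::real)" for i :: nat and v
  have fm: "\<And>i. i \<in> I \<Longrightarrow> f i \<in> borel_measurable borel" unfolding f_def by measurable
  have fb: "\<And>i v. i \<in> I \<Longrightarrow> \<bar>f i v\<bar> \<le> 1" unfolding f_def by auto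
  have Ef: "expectation (\<lambda>\<omega>. f i (\<xi> i \<omega>)) = 1 - p i" if i: "i \<in> I" for i
  proof -
    have "expectation (\<lambda>\<omega>. f i (\<xi> i \<omega>)) = prob {\<omega>\<in>space M. g (\<xi> i \<omega>) \<le> c}"
      unfolding f_def by (rule ind_expect[OF i]) measurable
    also have "{\<omega>\<in>space M. g (\<xi> i \<omega>) \<le> c} = space M - {\<omega>\<in>space M. c < g (\<xi> i \<omega>)}" by auto
    also have "prob \<dots> = 1 - p i" unfolding p_def
      by (rule prob_compl) (use i in measurable)
    finally show ?thesis .
  qed
  have Pint: "integrable M (\<lambda>\<omega>. \<Prod>i\<in>I. f i (\<xi> i \<omega>))"
  proof (rule integrable_const_bound[where B=1])
    show "AE x in M. norm (\<Prod>i\<in>I. f i (\<xi> i x)) \<le> 1"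
      by (intro AE_I2) (auto simp: f_def prod_nonneg intro!: prod_le_1 )
    show "(\<lambda>\<omega>. \<Prod>i\<in>I. f i (\<xi> i \<omega>)) \<in> borel_measurable M"
      unfolding f_def by measurable
  qed
  have "prob A = expectation (indicator A)" using A by simp
  also have "\<dots> \<le> expectation (\<lambda>\<omega>. \<Prod>i\<in>I. f i (\<xi> i \<omega>))"
  proof (rule integral_mono[OF _ Pint])
    show "integrable M (indicator A :: 'a \<Rightarrow> real)"
      by (rule integrable_const_bound[where B=1]) (use A in auto)
    fix \<omega> assume "\<omega> \<in> space M"
    show "indicator A \<omega> \<le> (\<Prod>i\<in>I. f i (\<xi> i \<omega>))"
    proof (cases "\<omega> \<in> A")
      case True then show ?thesis using onA by (simp add: f_def)
    next
      case False then show ?thesis by (simp add: f_def prod_nonneg)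
    qed
  qed
  also have "\<dots> = (\<Prod>i\<in>I. 1 - p i)"
    using indep_prod_expect[OF I(1) ind fm fb] Ef by simp
  also have "\<dots> \<le> (\<Prod>i\<in>I. exp (- p i))"
  proof (rule prod_mono)
    fix i assume "i \<in> I"
    have "p i \<le> 1" unfolding p_def by simp
    then show "0 \<le> 1 - p i \<and> 1 - p i \<le> exp (- p i)"
      using exp_ge_add_one_self[of "- p i"] by simp
  qed
  also have "\<dots> = exp (- (\<Sum>i\<in>I. p i))" by (simp add: exp_sum[symmetric] sum_negf I(1))
  finally have "prob A \<le> exp (- (\<Sum>i\<in>I. p i))" .
  then have "exp (-1) \<le> exp (- (\<Sum>i\<in>I. p i))" using PA by linarith
  then show ?thesis unfolding p_def by simp
qed

lemma partB:
  assumes A: "A \<in> events" and PA: "exp (-1) \<le> prob A" and c: "0 \<le> c"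
    and onA: "\<And>\<omega> i. \<omega> \<in> A \<Longrightarrow> i \<in> I \<Longrightarrow> g (\<xi> i \<omega>) \<le> c"
  shows "(\<Sum>i\<in>I. expectation (\<lambda>\<omega>. g (\<xi> i \<omega>)) - expectation (\<lambda>\<omega>. min (g (\<xi> i \<omega>)) c))
         \<le> sqrt (\<Sum>i\<in>I. expectation (\<lambda>\<omega>. (g (\<xi> i \<omega>))^2))"
proof -
  define p where "p i = prob {\<omega>\<in>space M. c < g (\<xi> i \<omega>)}" for i
  define S2 where "S2 = (\<Sum>i\<in>I. expectation (\<lambda>\<omega>. (g (\<xi> i \<omega>))^2))"
  define T where "T = (\<Sum>i\<in>I. expectation (\<lambda>\<omega>. g (\<xi> i \<omega>)) - expectation (\<lambda>\<omega>. min (g (\<xi> i \<omega>)) c))"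
  have sp: "(\<Sum>i\<in>I. p i) \<le> 1" unfolding p_def by (rule sum_p_le1[OF A PA onA])
  have pnn: "\<And>i. 0 \<le> p i" unfolding p_def by simp
  have S2nn: "0 \<le> S2" unfolding S2_def by (intro sum_nonneg integral_nonneg_AE) auto
  have per: "expectation (\<lambda>\<omega>. g (\<xi> i \<omega>)) - expectation (\<lambda>\<omega>. min (g (\<xi> i \<omega>)) c)
      \<le> (\<alpha> * expectation (\<lambda>\<omega>. (g (\<xi> i \<omega>))^2) + p i / \<alpha>) / 2" if i: "i \<in> I" and al: "0 < \<alpha>" for i \<alpha>
  proof -
    note i[measurable]
    have "expectation (\<lambda>\<omega>. g (\<xi> i \<omega>)) - expectation (\<lambda>\<omega>. min (g (\<xi> i \<omega>)) c)
        = expectation (\<lambda>\<omega>. g (\<xi> i \<omega>) - min (g (\<xi> i \<omega>)) c)"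
      by (rule Bochner_Integration.integral_diff[symmetric]) (use Zint[OF i] Yint[OF i c] in auto)
    also have "\<dots> \<le> expectation (\<lambda>\<omega>. (\<alpha> * (g (\<xi> i \<omega>))^2 + (if c < g (\<xi> i \<omega>) then 1 else 0) / \<alpha>) / 2)"
    proof (rule integral_mono)
      show "integrable M (\<lambda>\<omega>. g (\<xi> i \<omega>) - min (g (\<xi> i \<omega>)) c)"
        using Zint[OF i] Yint[OF i c] by auto
      have "integrable M (\<lambda>\<omega>. if c < g (\<xi> i \<omega>) then 1 else 0::real)"
        by (rule integrable_const_bound[where B=1]) auto
      then show "integrable M (\<lambda>\<omega>. (\<alpha> * (g (\<xi> i \<omega>))^2 + (if c < g (\<xi> i \<omega>) then 1 else 0) / \<alpha>) / 2)"
        using gint[OF i] by auto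
      fix \<omega>
      define z where "z = g (\<xi> i \<omega>)"
      have z0: "0 \<le> z" unfolding z_def by (rule gpos)
      have "z - min z c \<le> (\<alpha> * z^2 + (if c < z then 1 else 0) / \<alpha>) / 2"
      proof (cases "c < z")
        case True
        have "0 \<le> (\<alpha> * z - 1)^2" by simp
        then have "2 * \<alpha> * z \<le> \<alpha>^2 * z^2 + 1" unfolding power2_diff by (simp add: power_mult_distrib)
        then have "2 * z \<le> \<alpha> * z^2 + 1 / \<alpha>" using al by (simp add: field_simps power2_eq_square)
        then show ?thesis using True c by simp
      next
        case False
        then show ?thesis using al by simp
      qed
      then show "g (\<xi> i \<omega>) - min (g (\<xi> i \<omega>)) c \<le> (\<alpha> * (g (\<xi> i \<omega>))^2 + (if c < g (\<xi> i \<omega>) then 1 else 0) / \<alpha>) / 2"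
        by (simp add: z_def)
    qed
    also have "\<dots> = (\<alpha> * expectation (\<lambda>\<omega>. (g (\<xi> i \<omega>))^2) + p i / \<alpha>) / 2"
    proof -
      have "expectation (\<lambda>\<omega>. if c < g (\<xi> i \<omega>) then 1 else 0::real) = p i"
        unfolding p_def by (rule ind_expect[OF i]) measurable
      moreover have "integrable M (\<lambda>\<omega>. if c < g (\<xi> i \<omega>) then 1 else 0::real)"
        by (rule integrable_const_bound[where B=1]) auto
      ultimately show ?thesis using gint[OF i] by simp
    qed
    finally show ?thesis .
  qed
  have all: "T \<le> (\<alpha> * S2 + 1 / \<alpha>) / 2" if al: "0 < \<alpha>" for \<alpha>
  proof -
    have "T \<le> (\<Sum>i\<in>I. (\<alpha> * expectation (\<lambda>\<omega>. (g (\<xi> i \<omega>))^2) + p i / \<alpha>) / 2)"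
      unfolding T_def by (intro sum_mono per al)
    also have "\<dots> = (\<alpha> * S2 + (\<Sum>i\<in>I. p i) / \<alpha>) / 2"
      unfolding S2_def by (simp add: sum_divide_distrib[symmetric] sum.distrib sum_distrib_left)
    also have "\<dots> \<le> (\<alpha> * S2 + 1 / \<alpha>) / 2"
      using sp al by (simp add: divide_right_mono)
    finally show ?thesis .
  qed
  show ?thesis
  proof (cases "S2 = 0")
    case True
    have "T \<le> 0"
    proof (rule ccontr)
      assume "\<not> T \<le> 0"
      then have "0 < T" by simp
      with all[of "1/T"] True show False by simp
    qed
    then show ?thesis using True unfolding T_def S2_def by simp
  next
    case False
    then have "0 < S2" using S2nn by simp
    then have "T \<le> ((1 / sqrt S2) * S2 + 1 / (1 / sqrt S2)) / 2" by (intro all) simp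
    also have "\<dots> = sqrt S2" using \<open>0 < S2\<close>
      by (simp add: field_simps)
    finally show ?thesis unfolding T_def S2_def .
  qed
qed

end

context coord begin

lemma upper_chernoff:
  assumes lam: "0 \<le> l"
  shows "prob {\<omega>\<in>space M. s \<le> (\<Sum>i\<in>I. l * (g (\<xi> i \<omega>) - expectation (\<lambda>\<omega>. g (\<xi> i \<omega>)))
            - l^2 * (g (\<xi> i \<omega>))^2 / 2)} \<le> exp (- s)"
proof -
  define h where "h i v = l * (g v - expectation (\<lambda>\<omega>. g (\<xi> i \<omega>))) - l^2 * (g v)^2 / 2" for i v
  have "prob {\<omega>\<in>space M. s \<le> (\<Sum>i\<in>I. h i (\<xi> i \<omega>))} \<le> exp (- s)"
  proof (rule exp_sum_bound[OF I(1) ind, where C="1/2"])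
    fix i assume i: "i \<in> I"
    show "h i \<in> borel_measurable borel" unfolding h_def by measurable
    have EZ: "0 \<le> expectation (\<lambda>\<omega>. g (\<xi> i \<omega>))" by (intro integral_nonneg_AE) (auto simp: gpos)
    fix v
    have "0 \<le> (l * g v - 1)^2" by simp
    then have "l * g v - l^2 * (g v)^2 / 2 \<le> 1/2" unfolding power2_diff by (simp add: power_mult_distrib)
    then show "h i v \<le> 1/2" unfolding h_def using EZ lam
      by (smt (verit) mult_nonneg_nonneg right_diff_distrib)
  next
    fix i assume i[measurable]: "i \<in> I"
    define m where "m = expectation (\<lambda>\<omega>. g (\<xi> i \<omega>))"
    have m0: "0 \<le> m" unfolding m_def by (intro integral_nonneg_AE) (auto simp: gpos)
    have pt: "exp (h i v) \<le> exp (- l * m) * (1 + l * g v)" for v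
    proof -
      have "exp (h i v) = exp (- l * m) * exp (l * g v - (l * g v)^2 / 2)"
        unfolding h_def m_def by (simp add: exp_add[symmetric] algebra_simps power_mult_distrib)
      also have "\<dots> \<le> exp (- l * m) * (1 + l * g v)"
        by (intro mult_left_mono exp_up_bound) (use lam gpos in auto)
      finally show ?thesis .
    qed
    have "expectation (\<lambda>\<omega>. exp (h i (\<xi> i \<omega>))) \<le> expectation (\<lambda>\<omega>. exp (- l * m) * (1 + l * g (\<xi> i \<omega>)))"
    proof (rule integral_mono)
      show "integrable M (\<lambda>\<omega>. exp (- l * m) * (1 + l * g (\<xi> i \<omega>)))" using Zint[OF i] by simp
      show "integrable M (\<lambda>\<omega>. exp (h i (\<xi> i \<omega>)))"
      proof (rule integrable_const_bound[where B="exp (1/2)"])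
        show "AE x in M. norm (exp (h i (\<xi> i x))) \<le> exp (1/2)"
        proof (rule AE_I2)
          fix x
          have "0 \<le> (l * g (\<xi> i x) - 1)^2" by simp
          then have "l * g (\<xi> i x) - l^2 * (g (\<xi> i x))^2 / 2 \<le> 1/2" unfolding power2_diff by (simp add: power_mult_distrib)
          then have "h i (\<xi> i x) \<le> 1/2" unfolding h_def using m0 lam unfolding m_def
            by (smt (verit) mult_nonneg_nonneg right_diff_distrib)
          then show "norm (exp (h i (\<xi> i x))) \<le> exp (1/2)" by simp
        qed
        show "(\<lambda>\<omega>. exp (h i (\<xi> i \<omega>))) \<in> borel_measurable M" unfolding h_def by measurable
      qed
    qed (rule pt)
    also have "\<dots> = exp (- l * m) * (1 + l * m)"
      using Zint[OF i] unfolding m_def by (simp add: prob_space)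
    also have "\<dots> \<le> exp (- l * m) * exp (l * m)"
      by (intro mult_left_mono) auto
    also have "\<dots> = 1" by (simp add: exp_add[symmetric])
    finally show "expectation (\<lambda>\<omega>. exp (h i (\<xi> i \<omega>))) \<le> 1" .
  qed
  then show ?thesis unfolding h_def .
qed

lemma lower_chernoff:
  assumes lam: "0 \<le> l" and c: "0 \<le> c"
  shows "prob {\<omega>\<in>space M. s \<le> (\<Sum>i\<in>I. l * (expectation (\<lambda>\<omega>. min (g (\<xi> i \<omega>)) c) - min (g (\<xi> i \<omega>)) c)
            - l^2 * expectation (\<lambda>\<omega>. (min (g (\<xi> i \<omega>)) c)^2) / 2)} \<le> exp (- s)"
proof -
  define h where "h i v = l * (expectation (\<lambda>\<omega>. min (g (\<xi> i \<omega>)) c) - min (g v) c)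
            - l^2 * expectation (\<lambda>\<omega>. (min (g (\<xi> i \<omega>)) c)^2) / 2" for i v
  have EYle: "expectation (\<lambda>\<omega>. min (g (\<xi> i \<omega>)) c) \<le> c" if i: "i \<in> I" for i
  proof -
    have "expectation (\<lambda>\<omega>. min (g (\<xi> i \<omega>)) c) \<le> expectation (\<lambda>\<omega>. c)"
      by (rule integral_mono) (use Yint[OF i c] in auto)
    then show ?thesis by (simp add: prob_space)
  qed
  have hb: "h i v \<le> l * c" if i: "i \<in> I" for i v
  proof -
    have "0 \<le> expectation (\<lambda>\<omega>. (min (g (\<xi> i \<omega>)) c)^2)" by (intro integral_nonneg_AE) auto
    then have a: "0 \<le> l^2 * expectation (\<lambda>\<omega>. (min (g (\<xi> i \<omega>)) c)^2) / 2" by simp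
    have "0 \<le> min (g v) c" using gpos c by simp
    then have b: "0 \<le> l * min (g v) c" using lam by simp
    have "h i v \<le> l * expectation (\<lambda>\<omega>. min (g (\<xi> i \<omega>)) c)"
      unfolding h_def right_diff_distrib using a b by linarith
    also have "\<dots> \<le> l * c" using EYle[OF i] lam by (intro mult_left_mono)
    finally show ?thesis .
  qed
  have "prob {\<omega>\<in>space M. s \<le> (\<Sum>i\<in>I. h i (\<xi> i \<omega>))} \<le> exp (- s)"
  proof (rule exp_sum_bound[OF I(1) ind, where C="l * c"])
    fix i assume i: "i \<in> I"
    show "h i \<in> borel_measurable borel" unfolding h_def by measurable
    fix v show "h i v \<le> l * c" by (rule hb[OF i])
  next
    fix i assume i[measurable]: "i \<in> I"
    define m where "m = expectation (\<lambda>\<omega>. min (g (\<xi> i \<omega>)) c)"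
    define m2 where "m2 = expectation (\<lambda>\<omega>. (min (g (\<xi> i \<omega>)) c)^2)"
    have pt: "exp (h i v) \<le> exp (l * m - l^2 * m2 / 2) * (1 - l * min (g v) c + l^2 * (min (g v) c)^2 / 2)" for v
    proof -
      have "exp (h i v) = exp (l * m - l^2 * m2 / 2) * exp (- (l * min (g v) c))"
        unfolding h_def m_def m2_def by (simp add: exp_add[symmetric] algebra_simps)
      also have "\<dots> \<le> exp (l * m - l^2 * m2 / 2) * (1 - l * min (g v) c + l^2 * (min (g v) c)^2 / 2)"
        by (intro mult_left_mono) (use exp_low_bound[of "l * min (g v) c"] lam gpos c in \<open>auto simp: power_mult_distrib\<close>)
      finally show ?thesis .
    qed
    have "expectation (\<lambda>\<omega>. exp (h i (\<xi> i \<omega>))) \<le> expectation (\<lambda>\<omega>. exp (l * m - l^2 * m2 / 2) * (1 - l * min (g (\<xi> i \<omega>)) c + l^2 * (min (g (\<xi> i \<omega>)) c)^2 / 2))"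
    proof (rule integral_mono)
      show "integrable M (\<lambda>\<omega>. exp (l * m - l^2 * m2 / 2) * (1 - l * min (g (\<xi> i \<omega>)) c + l^2 * (min (g (\<xi> i \<omega>)) c)^2 / 2))"
        using Yint[OF i c] Y2int[OF i c] by simp
      show "integrable M (\<lambda>\<omega>. exp (h i (\<xi> i \<omega>)))"
      proof (rule integrable_const_bound[where B="exp (l * c)"])
        show "AE x in M. norm (exp (h i (\<xi> i x))) \<le> exp (l * c)"
          using hb[OF i] by (intro AE_I2) simp
        show "(\<lambda>\<omega>. exp (h i (\<xi> i \<omega>))) \<in> borel_measurable M" unfolding h_def by measurable
      qed
    qed (rule pt)
    also have "\<dots> = exp (l * m - l^2 * m2 / 2) * (1 - l * m + l^2 * m2 / 2)"
      using Yint[OF i c] Y2int[OF i c] unfolding m_def m2_def by (simp add: prob_space)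
    also have "\<dots> \<le> exp (l * m - l^2 * m2 / 2) * exp (- (l * m - l^2 * m2 / 2))"
    proof (intro mult_left_mono)
      show "1 - l * m + l^2 * m2 / 2 \<le> exp (- (l * m - l^2 * m2 / 2))"
        using exp_ge_add_one_self[of "- (l * m - l^2 * m2 / 2)"] by (simp add: algebra_simps)
    qed simp
    also have "\<dots> = 1" by (simp add: exp_add[symmetric])
    finally show "expectation (\<lambda>\<omega>. exp (h i (\<xi> i \<omega>))) \<le> 1" .
  qed
  then show ?thesis unfolding h_def .
qed

end

context coord begin

lemma WY_bound:
  assumes A: "A \<in> events" and PA: "exp (-1) \<le> prob A" and Q: "0 < Q"
    and cdef: "c = sqrt (real (card I) * Q)"
    and onA: "\<And>\<omega>. \<omega> \<in> A \<Longrightarrow> (\<Sum>i\<in>I. (g (\<xi> i \<omega>))^2) \<le> real (card I) * Q"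
  shows "(\<Sum>i\<in>I. expectation (\<lambda>\<omega>. (min (g (\<xi> i \<omega>)) c)^2)) \<le> 4 * (real (card I) * Q)"
proof -
  define N where "N = real (card I) * Q"
  have N: "0 < N" unfolding N_def using Q I by (simp add: card_gt_0_iff)
  have c0: "0 \<le> c" unfolding cdef using Q by (simp add: less_imp_le)
  have cc: "c^2 = N" unfolding cdef N_def using Q by (simp add: less_imp_le)
  define th where "th = 1 / N"
  have th: "0 < th" unfolding th_def using N by simp
  define f where "f i v = exp (- th * (min (g v) c)^2)" for i :: nat and v
  define m2 where "m2 i = expectation (\<lambda>\<omega>. (min (g (\<xi> i \<omega>)) c)^2)" for i
  have fm: "\<And>i. i \<in> I \<Longrightarrow> f i \<in> borel_measurable borel" unfolding f_def by measurable
  have fb: "\<And>i v. i \<in> I \<Longrightarrow> \<bar>f i v\<bar> \<le> 1" unfolding f_def using th by simp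
  have Ef: "expectation (\<lambda>\<omega>. f i (\<xi> i \<omega>)) \<le> exp (- th * m2 i / 2)" if i[measurable]: "i \<in> I" for i
  proof -
    have pt: "f i v \<le> 1 - th * (min (g v) c)^2 / 2" for v
    proof -
      define u where "u = th * (min (g v) c)^2"
      have u0: "0 \<le> u" unfolding u_def using th by simp
      have "(min (g v) c)^2 \<le> c^2" using gpos[of v] c0 by (intro power_mono) auto
      then have u1: "u \<le> 1" unfolding u_def th_def using cc N by (simp add: field_simps)
      have "f i v = exp (- u)" unfolding f_def u_def by simp
      also have "\<dots> \<le> 1 - u + u^2/2" by (rule exp_low_bound[OF u0])
      also have "\<dots> \<le> 1 - u / 2"
      proof -
        have "u^2 \<le> u" using u0 u1 by (simp add: power2_eq_square mult_left_le_one_le)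
        then show ?thesis by simp
      qed
      finally show ?thesis unfolding u_def by simp
    qed
    have "expectation (\<lambda>\<omega>. f i (\<xi> i \<omega>)) \<le> expectation (\<lambda>\<omega>. 1 - th * (min (g (\<xi> i \<omega>)) c)^2 / 2)"
    proof (rule integral_mono)
      show "integrable M (\<lambda>\<omega>. f i (\<xi> i \<omega>))"
        by (rule integrable_const_bound[where B=1]) (use fb[OF i] in \<open>auto simp: f_def\<close>)
      show "integrable M (\<lambda>\<omega>. 1 - th * (min (g (\<xi> i \<omega>)) c)^2 / 2)"
        using Y2int[OF i c0] by simp
    qed (rule pt)
    also have "\<dots> = 1 - th * m2 i / 2" using Y2int[OF i c0] unfolding m2_def by (simp add: prob_space)
    also have "\<dots> \<le> exp (- th * m2 i / 2)" using exp_ge_add_one_self[of "- th * m2 i / 2"] by simp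
    finally show ?thesis .
  qed
  have Pint: "integrable M (\<lambda>\<omega>. \<Prod>i\<in>I. f i (\<xi> i \<omega>))"
  proof (rule integrable_const_bound[where B=1])
    show "AE x in M. norm (\<Prod>i\<in>I. f i (\<xi> i x)) \<le> 1"
    proof (rule AE_I2)
      fix x
      have "(\<Prod>i\<in>I. f i (\<xi> i x)) \<le> 1"
        by (intro prod_le_1) (use fb in \<open>auto simp: f_def\<close>)
      then show "norm (\<Prod>i\<in>I. f i (\<xi> i x)) \<le> 1" by (simp add: f_def prod_nonneg)
    qed
    show "(\<lambda>\<omega>. \<Prod>i\<in>I. f i (\<xi> i \<omega>)) \<in> borel_measurable M"
      unfolding f_def by measurable
  qed
  have "exp (-1) * prob A = expectation (\<lambda>\<omega>. exp (-1) * indicator A \<omega>)" using A by simp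
  also have "\<dots> \<le> expectation (\<lambda>\<omega>. \<Prod>i\<in>I. f i (\<xi> i \<omega>))"
  proof (rule integral_mono[OF _ Pint])
    have "integrable M (indicator A :: 'a \<Rightarrow> real)"
      by (rule integrable_const_bound[where B=1]) (use A in auto)
    then show "integrable M (\<lambda>\<omega>. exp (-1) * indicator A \<omega> :: real)" by simp
    fix \<omega> assume "\<omega> \<in> space M"
    show "exp (-1) * indicator A \<omega> \<le> (\<Prod>i\<in>I. f i (\<xi> i \<omega>))"
    proof (cases "\<omega> \<in> A")
      case True
      have "(\<Sum>i\<in>I. (min (g (\<xi> i \<omega>)) c)^2) \<le> (\<Sum>i\<in>I. (g (\<xi> i \<omega>))^2)"
        by (intro sum_mono power_mono) (use gpos c0 in auto)
      also have "\<dots> \<le> N" using onA[OF True] unfolding N_def .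
      finally have "- 1 \<le> - th * (\<Sum>i\<in>I. (min (g (\<xi> i \<omega>)) c)^2)"
        unfolding th_def using N by (simp add: field_simps)
      then have "exp (-1) \<le> exp (\<Sum>i\<in>I. - th * (min (g (\<xi> i \<omega>)) c)^2)"
        by (simp add: sum_distrib_left)
      also have "\<dots> = (\<Prod>i\<in>I. f i (\<xi> i \<omega>))" unfolding f_def by (simp add: exp_sum I(1))
      finally show ?thesis using True by simp
    next
      case False then show ?thesis by (simp add: f_def prod_nonneg)
    qed
  qed
  also have "\<dots> = (\<Prod>i\<in>I. expectation (\<lambda>\<omega>. f i (\<xi> i \<omega>)))"
    by (rule indep_prod_expect[OF I(1) ind fm fb])
  also have "\<dots> \<le> (\<Prod>i\<in>I. exp (- th * m2 i / 2))"
  proof (rule prod_mono)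
    fix i assume i: "i \<in> I"
    show "0 \<le> expectation (\<lambda>\<omega>. f i (\<xi> i \<omega>)) \<and> expectation (\<lambda>\<omega>. f i (\<xi> i \<omega>)) \<le> exp (- th * m2 i / 2)"
      using Ef[OF i] by (auto intro!: integral_nonneg_AE simp: f_def)
  qed
  also have "\<dots> = exp (- th * (\<Sum>i\<in>I. m2 i) / 2)"
    by (simp add: exp_sum[symmetric] I(1) sum_distrib_left sum_divide_distrib)
  finally have "exp (-1) * exp (-1) \<le> exp (- th * (\<Sum>i\<in>I. m2 i) / 2)"
    using PA by (smt (verit) exp_gt_zero mult_left_mono)
  then have "exp (-2) \<le> exp (- th * (\<Sum>i\<in>I. m2 i) / 2)" by (simp add: exp_add[symmetric])
  then have "th * (\<Sum>i\<in>I. m2 i) \<le> 4" by simp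
  then show ?thesis unfolding th_def m2_def N_def[symmetric] using N by (simp add: field_simps)
qed

end


lemma alg_up:
  fixes s Q n L a b :: real
  assumes s: "0 < s" and Q: "0 < Q" and n: "0 < n" and sL: "s^2 = 2 * L/n * Q"
    and h: "s/Q * a - (s/Q)^2 * b / 2 < L" and b: "b \<le> n * Q"
  shows "a/n < s"
proof -
  have Ld: "L = s^2 * n / (2 * Q)" using sL n Q by (simp add: field_simps)
  have "2 * Q^2 * (s/Q * a - (s/Q)^2 * b / 2) < 2 * Q^2 * L" using h Q by simp
  moreover have "2 * Q^2 * (s/Q * a - (s/Q)^2 * b / 2) = 2 * Q * s * a - s^2 * b" using Q by (simp add: field_simps power2_eq_square)
  moreover have "2 * Q^2 * L = s^2 * n * Q" unfolding Ld using Q by (simp add: field_simps power2_eq_square)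
  ultimately have "2 * Q * s * a - s^2 * b < s^2 * n * Q" by simp
  moreover have "s^2 * b \<le> s^2 * (n * Q)" using b by (simp add: mult_left_mono)
  ultimately have "2 * Q * s * a < 2 * Q * s * (s * n)" by (simp add: algebra_simps power2_eq_square)
  then have "a < s * n" using Q s by simp
  then show ?thesis using n by (simp add: field_simps)
qed

lemma alg_low:
  fixes s Q n L a b :: real
  assumes s: "0 < s" and Q: "0 < Q" and n: "0 < n" and sL: "s^2 = 2 * L/n * Q"
    and h: "s/(2 * Q) * a - (s/(2 * Q))^2 * b / 2 < L" and b: "b \<le> 4 * (n * Q)"
  shows "a/n < 2 * s"
proof -
  have Ld: "L = s^2 * n / (2 * Q)" using sL n Q by (simp add: field_simps)
  have "8 * Q^2 * (s/(2 * Q) * a - (s/(2 * Q))^2 * b / 2) < 8 * Q^2 * L" using h Q by simp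
  moreover have "8 * Q^2 * (s/(2 * Q) * a - (s/(2 * Q))^2 * b / 2) = 4 * Q * s * a - s^2 * b" using Q by (simp add: field_simps power2_eq_square)
  moreover have "8 * Q^2 * L = 4 * s^2 * n * Q" unfolding Ld using Q by (simp add: field_simps power2_eq_square)
  ultimately have "4 * Q * s * a - s^2 * b < 4 * s^2 * n * Q" by linarith
  moreover have "s^2 * b \<le> s^2 * (4 * (n * Q))" using b by (simp add: mult_left_mono)
  ultimately have "4 * Q * s * a < 4 * Q * s * (2 * s * n)" by (simp add: algebra_simps power2_eq_square)
  then have "a < 2 * s * n" using Q s by (simp add: mult_ac)
  then show ?thesis using n by (simp add: field_simps)
qed

context coord begin

lemma coord_main:
  assumes A: "A \<in> events" and PA: "exp (-1) \<le> prob A" and Q: "0 \<le> Q" and L: "0 < L"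
    and onA: "\<And>\<omega>. \<omega> \<in> A \<Longrightarrow> (\<Sum>i\<in>I. (g (\<xi> i \<omega>))^2) \<le> real (card I) * Q"
  shows "\<exists>U\<in>events. prob U \<le> 2 * exp (- L) \<and> (\<forall>\<omega>\<in>A - U.
     \<bar>1 / real (card I) * (\<Sum>i\<in>I. g (\<xi> i \<omega>)) - 1 / real (card I) * (\<Sum>i\<in>I. expectation (\<lambda>\<omega>. g (\<xi> i \<omega>)))\<bar>
       \<le> max (4 * sqrt (2 * L / real (card I) * Q))
             (2 * sqrt (2 * (1 / real (card I) * (\<Sum>i\<in>I. expectation (\<lambda>\<omega>. (g (\<xi> i \<omega>))^2))) / real (card I))))"
proof -
  define n where "n = real (card I)"
  have n: "0 < n" using I by (simp add: n_def card_gt_0_iff)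
  define c where "c = sqrt (n * Q)"
  have c0: "0 \<le> c" using Q n by (simp add: c_def)
  define EZ where "EZ i = expectation (\<lambda>\<omega>. g (\<xi> i \<omega>))" for i
  define EY where "EY i = expectation (\<lambda>\<omega>. min (g (\<xi> i \<omega>)) c)" for i
  define EY2 where "EY2 i = expectation (\<lambda>\<omega>. (min (g (\<xi> i \<omega>)) c)^2)" for i
  define S2 where "S2 = (\<Sum>i\<in>I. expectation (\<lambda>\<omega>. (g (\<xi> i \<omega>))^2))"
  define W where "W = 1 / n * S2"
  have S2nn: "0 \<le> S2" unfolding S2_def by (intro sum_nonneg integral_nonneg_AE) auto
  have W0: "0 \<le> W" using S2nn n by (simp add: W_def)
  have EZ0: "\<And>i. 0 \<le> EZ i" unfolding EZ_def by (intro integral_nonneg_AE) (auto simp: gpos)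
  have le_c: "g (\<xi> i \<omega>) \<le> c" if w: "\<omega> \<in> A" and i: "i \<in> I" for \<omega> i
  proof -
    have "(g (\<xi> i \<omega>))^2 \<le> (\<Sum>i\<in>I. (g (\<xi> i \<omega>))^2)"
      by (rule member_le_sum[OF i _ I(1)]) simp
    also have "\<dots> \<le> n * Q" using onA[OF w] unfolding n_def .
    finally show ?thesis unfolding c_def by (rule real_le_rsqrt)
  qed
  have Yeq: "min (g (\<xi> i \<omega>)) c = g (\<xi> i \<omega>)" if "\<omega> \<in> A" "i \<in> I" for \<omega> i
    using le_c[OF that] by simp
  have B: "(\<Sum>i\<in>I. EZ i - EY i) \<le> sqrt S2"
    unfolding EZ_def EY_def S2_def by (rule partB[OF A PA c0 le_c])
  have B': "1 / n * (\<Sum>i\<in>I. EZ i - EY i) \<le> sqrt (W / n)"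
  proof -
    have "sqrt (W / n) = sqrt S2 / n" unfolding W_def using n
      by (simp add: real_sqrt_divide power2_eq_square[symmetric])
    then show ?thesis using B n by (simp add: divide_right_mono)
  qed
  have R2: "sqrt (W / n) \<le> sqrt (2 * W / n)" using W0 n by (simp add: divide_right_mono)
  have R2': "2 * sqrt (2 * W / n) = 2 * sqrt (2 * (1 / n * S2) / n)" unfolding W_def ..
  show ?thesis
  proof (cases "Q = 0")
    case True
    have c: "c = 0" unfolding c_def True by simp
    have EY0: "EY i = 0" for i unfolding EY_def c using gpos by (simp add: min_absorb2)
    show ?thesis
    proof (intro bexI[of _ "{}"] conjI ballI)
      fix \<omega> assume w: "\<omega> \<in> A - {}"
      have z: "g (\<xi> i \<omega>) = 0" if "i \<in> I" for i using le_c[OF _ that] w gpos c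
        by (metis Diff_empty order_antisym)
      have "\<bar>1 / n * (\<Sum>i\<in>I. g (\<xi> i \<omega>)) - 1 / n * (\<Sum>i\<in>I. EZ i)\<bar> = 1 / n * (\<Sum>i\<in>I. EZ i - EY i)"
        using z EY0 EZ0 n by (simp add: sum_nonneg)
      also have "\<dots> \<le> 2 * sqrt (2 * W / n)"
      proof -
        have "0 \<le> sqrt (2 * W / n)" using W0 n by simp
        then show ?thesis using B' R2 by linarith
      qed
      finally show "\<bar>1 / real (card I) * (\<Sum>i\<in>I. g (\<xi> i \<omega>)) - 1 / real (card I) * (\<Sum>i\<in>I. expectation (\<lambda>\<omega>. g (\<xi> i \<omega>)))\<bar>
       \<le> max (4 * sqrt (2 * L / real (card I) * Q))
             (2 * sqrt (2 * (1 / real (card I) * (\<Sum>i\<in>I. expectation (\<lambda>\<omega>. (g (\<xi> i \<omega>))^2))) / real (card I)))"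
        unfolding n_def[symmetric] EZ_def[symmetric] S2_def[symmetric] R2'[symmetric] by simp
    qed (auto)
  next
    case False
    then have Qp: "0 < Q" using Q by simp
    define s where "s = sqrt (2 * L / n * Q)"
    have s: "0 < s" unfolding s_def using Qp L n by simp
    have s2: "s^2 = 2 * L / n * Q" unfolding s_def using Qp L n by simp
    define Up where "Up = {\<omega>\<in>space M. L \<le> (\<Sum>i\<in>I. s/Q * (g (\<xi> i \<omega>) - expectation (\<lambda>\<omega>. g (\<xi> i \<omega>)))
            - (s/Q)^2 * (g (\<xi> i \<omega>))^2 / 2)}"
    define Low where "Low = {\<omega>\<in>space M. L \<le> (\<Sum>i\<in>I. s/(2*Q) * (expectation (\<lambda>\<omega>. min (g (\<xi> i \<omega>)) c) - min (g (\<xi> i \<omega>)) c)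
            - (s/(2*Q))^2 * expectation (\<lambda>\<omega>. (min (g (\<xi> i \<omega>)) c)^2) / 2)}"
    have PUp: "prob Up \<le> exp (- L)" unfolding Up_def by (rule upper_chernoff) (use s Qp in simp)
    have PLow: "prob Low \<le> exp (- L)" unfolding Low_def by (rule lower_chernoff) (use s Qp c0 in simp_all)
    have Upm: "Up \<in> events" unfolding Up_def by measurable
    have Lowm: "Low \<in> events" unfolding Low_def by measurable
    have WY: "(\<Sum>i\<in>I. EY2 i) \<le> 4 * (n * Q)"
      unfolding EY2_def n_def by (rule WY_bound[OF A PA Qp]) (use onA in \<open>simp_all add: c_def n_def\<close>)
    show ?thesis
    proof (intro bexI[of _ "Up \<union> Low"] conjI ballI)
      show "Up \<union> Low \<in> events" using Upm Lowm by simp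
      show "prob (Up \<union> Low) \<le> 2 * exp (- L)" using measure_Un_le[OF Upm Lowm] PUp PLow by simp
      fix \<omega> assume w: "\<omega> \<in> A - (Up \<union> Low)"
      then have wA: "\<omega> \<in> A" and wsp: "\<omega> \<in> space M" and nUp: "\<omega> \<notin> Up" and nLow: "\<omega> \<notin> Low"
        using A sets.sets_into_space by auto
      define a where "a = (\<Sum>i\<in>I. g (\<xi> i \<omega>)) - (\<Sum>i\<in>I. EZ i)"
      define b where "b = (\<Sum>i\<in>I. (g (\<xi> i \<omega>))^2)"
      have "(\<Sum>i\<in>I. s/Q * (g (\<xi> i \<omega>) - expectation (\<lambda>\<omega>. g (\<xi> i \<omega>))) - (s/Q)^2 * (g (\<xi> i \<omega>))^2 / 2) < L"
        using nUp wsp unfolding Up_def by auto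
      moreover have "(\<Sum>i\<in>I. s/Q * (g (\<xi> i \<omega>) - expectation (\<lambda>\<omega>. g (\<xi> i \<omega>))) - (s/Q)^2 * (g (\<xi> i \<omega>))^2 / 2)
          = s/Q * a - (s/Q)^2 * b / 2"
        unfolding a_def b_def EZ_def
        by (simp add: sum_subtractf sum_distrib_left sum_divide_distrib right_diff_distrib)
      ultimately have "s/Q * a - (s/Q)^2 * b / 2 < L" by simp
      from alg_up[OF s Qp n s2 this] have up: "a / n < s" using onA[OF wA] unfolding b_def n_def by simp
      define a' where "a' = (\<Sum>i\<in>I. EY i) - (\<Sum>i\<in>I. g (\<xi> i \<omega>))"
      define b' where "b' = (\<Sum>i\<in>I. EY2 i)"
      have "(\<Sum>i\<in>I. s/(2*Q) * (expectation (\<lambda>\<omega>. min (g (\<xi> i \<omega>)) c) - min (g (\<xi> i \<omega>)) c)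
            - (s/(2*Q))^2 * expectation (\<lambda>\<omega>. (min (g (\<xi> i \<omega>)) c)^2) / 2) < L"
        using nLow wsp unfolding Low_def by auto
      moreover have "(\<Sum>i\<in>I. s/(2*Q) * (expectation (\<lambda>\<omega>. min (g (\<xi> i \<omega>)) c) - min (g (\<xi> i \<omega>)) c)
            - (s/(2*Q))^2 * expectation (\<lambda>\<omega>. (min (g (\<xi> i \<omega>)) c)^2) / 2)
          = s/(2*Q) * a' - (s/(2*Q))^2 * b' / 2"
      proof -
        have "(\<Sum>i\<in>I. s/(2*Q) * (expectation (\<lambda>\<omega>. min (g (\<xi> i \<omega>)) c) - min (g (\<xi> i \<omega>)) c)
            - (s/(2*Q))^2 * expectation (\<lambda>\<omega>. (min (g (\<xi> i \<omega>)) c)^2) / 2)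
          = (\<Sum>i\<in>I. s/(2*Q) * (EY i - g (\<xi> i \<omega>)) - (s/(2*Q))^2 * EY2 i / 2)"
          using Yeq[OF wA] unfolding EY_def EY2_def by (intro sum.cong) auto
        also have "\<dots> = s/(2*Q) * a' - (s/(2*Q))^2 * b' / 2"
          unfolding a'_def b'_def
          by (simp add: sum_subtractf sum_distrib_left sum_divide_distrib right_diff_distrib)
        finally show ?thesis .
      qed
      ultimately have "s/(2*Q) * a' - (s/(2*Q))^2 * b' / 2 < L" by simp
      from alg_low[OF s Qp n s2 this] have low: "a' / n < 2 * s" using WY unfolding b'_def by simp
      have D1: "1 / n * (\<Sum>i\<in>I. g (\<xi> i \<omega>)) - 1 / n * (\<Sum>i\<in>I. EZ i) = a / n"
        unfolding a_def by (simp add: diff_divide_distrib)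
      have D2: "- (a / n) = a' / n + 1 / n * (\<Sum>i\<in>I. EZ i - EY i)"
        unfolding a_def a'_def using n by (simp add: field_simps sum_subtractf)
      have "\<bar>a / n\<bar> \<le> max (4 * s) (2 * sqrt (2 * W / n))"
      proof -
        define r where "r = sqrt (2 * W / n)"
        define t where "t = sqrt (W / n)"
        have r0: "0 \<le> r" unfolding r_def using W0 n by simp
        have X: "1 / n * (\<Sum>i\<in>I. EZ i - EY i) \<le> t" using B' unfolding t_def .
        have tr: "t \<le> r" using R2 unfolding t_def r_def .
        have "a / n \<le> max (4 * s) (2 * r)" using up s by (intro max.coboundedI1) linarith
        moreover have "- (a / n) \<le> max (4 * s) (2 * r)"
        proof (cases "t \<le> 2 * s")
          case True
          then show ?thesis using D2 low X by (intro max.coboundedI1) linarith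
        next
          case False
          then show ?thesis using D2 low X tr by (intro max.coboundedI2) linarith
        qed
        ultimately show ?thesis unfolding r_def by (simp add: abs_le_iff)
      qed
      then show "\<bar>1 / real (card I) * (\<Sum>i\<in>I. g (\<xi> i \<omega>)) - 1 / real (card I) * (\<Sum>i\<in>I. expectation (\<lambda>\<omega>. g (\<xi> i \<omega>)))\<bar>
       \<le> max (4 * sqrt (2 * L / real (card I) * Q))
             (2 * sqrt (2 * (1 / real (card I) * (\<Sum>i\<in>I. expectation (\<lambda>\<omega>. (g (\<xi> i \<omega>))^2))) / real (card I)))"
        unfolding n_def[symmetric] EZ_def[symmetric] S2_def[symmetric] R2'[symmetric] s_def[symmetric] D1 .
    qed
  qed
qed

end


lemma (in prob_space) quantile_prop:
  fixes W :: "'a \<Rightarrow> real"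
  assumes Wm[measurable]: "W \<in> borel_measurable M" and W0: "\<And>\<omega>. \<omega> \<in> space M \<Longrightarrow> 0 \<le> W \<omega>"
    and a: "0 < \<alpha>" "\<alpha> < 1"
  shows "0 \<le> quantile M W \<alpha> \<and> \<alpha> \<le> prob {\<omega>\<in>space M. W \<omega> \<le> quantile M W \<alpha>}"
proof -
  define F where "F t = prob {\<omega>\<in>space M. W \<omega> \<le> t}" for t
  define S where "S = {t. \<alpha> \<le> F t}"
  have q: "quantile M W \<alpha> = Inf S" unfolding quantile_def S_def F_def ..
  have Fmono: "F s \<le> F t" if "s \<le> t" for s t
    unfolding F_def by (rule finite_measure_mono) (use that in auto)
  have "(\<lambda>k. F (real k)) \<longlonglongrightarrow> prob (\<Union>k. {\<omega>\<in>space M. W \<omega> \<le> real k})"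
    unfolding F_def by (rule finite_Lim_measure_incseq) (auto simp: incseq_def intro: order_trans)
  moreover have "(\<Union>k. {\<omega>\<in>space M. W \<omega> \<le> real k}) = space M"
    by (auto intro: real_arch_simple)
  ultimately have lim1: "(\<lambda>k. F (real k)) \<longlonglongrightarrow> 1" by (simp add: prob_space)
  have "eventually (\<lambda>k. \<alpha> < F (real k)) sequentially"
    using order_tendstoD(1)[OF lim1 a(2)] .
  then obtain k where "\<alpha> < F (real k)" by (metis eventually_sequentially order_refl)
  then have Sne: "S \<noteq> {}" unfolding S_def by (auto intro!: exI[of _ "real k"])
  have Sge: "0 \<le> t" if "t \<in> S" for t
  proof (rule ccontr)
    assume "\<not> 0 \<le> t"
    then have "{\<omega>\<in>space M. W \<omega> \<le> t} = {}" using W0 by force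
    then have "F t = 0" unfolding F_def by (simp only: measure_empty)
    then show False using that a unfolding S_def by simp
  qed
  have Q0: "0 \<le> Inf S" by (rule cInf_greatest[OF Sne Sge])
  define Q where "Q = Inf S"
  have each: "\<alpha> \<le> F (Q + 1 / (real k + 1))" for k
  proof -
    have "Inf S < Q + 1 / (real k + 1)" unfolding Q_def by simp
    then obtain t where t: "t \<in> S" "t < Q + 1 / (real k + 1)" using cInf_lessD[OF Sne] by blast
    then have "\<alpha> \<le> F t" unfolding S_def by simp
    also have "\<dots> \<le> F (Q + 1 / (real k + 1))" using t by (intro Fmono) simp
    finally show ?thesis .
  qed
  have "(\<lambda>k. F (Q + 1 / (real k + 1))) \<longlonglongrightarrow> prob (\<Inter>k. {\<omega>\<in>space M. W \<omega> \<le> Q + 1 / (real k + 1)})"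
    unfolding F_def
  proof (rule finite_Lim_measure_decseq)
    show "range (\<lambda>k. {\<omega>\<in>space M. W \<omega> \<le> Q + 1 / (real k + 1)}) \<subseteq> events" by auto
    show "decseq (\<lambda>k. {\<omega>\<in>space M. W \<omega> \<le> Q + 1 / (real k + 1)})"
      unfolding decseq_def
    proof (intro allI impI subsetI)
      fix m k :: nat and x assume mk: "m \<le> k" and x: "x \<in> {\<omega>\<in>space M. W \<omega> \<le> Q + 1 / (real k + 1)}"
      have "1 / (real k + 1) \<le> 1 / (real m + 1)" using mk by (intro divide_left_mono) auto
      then show "x \<in> {\<omega>\<in>space M. W \<omega> \<le> Q + 1 / (real m + 1)}" using x by auto
    qed
  qed
  moreover have "(\<Inter>k. {\<omega>\<in>space M. W \<omega> \<le> Q + 1 / (real k + 1)}) = {\<omega>\<in>space M. W \<omega> \<le> Q}"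
  proof (intro equalityI subsetI)
    fix x assume x: "x \<in> (\<Inter>k. {\<omega>\<in>space M. W \<omega> \<le> Q + 1 / (real k + 1)})"
    have "W x \<le> Q"
    proof (rule field_le_epsilon)
      fix e :: real assume e: "0 < e"
      obtain k :: nat where "1 / e < real k + 1" using reals_Archimedean2[of "1/e"]
        by (metis less_add_one less_trans)
      then have "1 / (real k + 1) < e" using e by (simp add: field_simps)
      moreover have "W x \<le> Q + 1 / (real k + 1)" using x by auto
      ultimately show "W x \<le> Q + e" by simp
    qed
    then show "x \<in> {\<omega>\<in>space M. W \<omega> \<le> Q}" using x by auto
  next
    fix x assume "x \<in> {\<omega>\<in>space M. W \<omega> \<le> Q}"
    then have x: "x \<in> space M" "W x \<le> Q" by auto
    show "x \<in> (\<Inter>k. {\<omega>\<in>space M. W \<omega> \<le> Q + 1 / (real k + 1)})"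
    proof -
      have "W x \<le> Q + 1 / (real k + 1)" for k :: nat
      proof -
        have "0 \<le> 1 / (real k + 1)" by simp
        then show ?thesis using x(2) by linarith
      qed
      then show ?thesis using x(1) by auto
    qed
  qed
  ultimately have "(\<lambda>k. F (Q + 1 / (real k + 1))) \<longlonglongrightarrow> F Q" unfolding F_def by simp
  then have "\<alpha> \<le> F Q" by (rule LIMSEQ_le_const) (use each in auto)
  then show ?thesis using Q0 unfolding q Q_def F_def by simp
qed



theorem lemma6:
  fixes M :: "'a measure" and n :: nat and \<tau> :: real
    and x :: "nat \<Rightarrow> 'a \<Rightarrow> real ^ 'p" and eps :: "nat \<Rightarrow> 'a \<Rightarrow> real"
  assumes "prob_space M"
    and "n \<ge> 1"
    and "0 < \<tau>" and "\<tau> < 1"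
    and indep: "prob_space.indep_vars M (\<lambda>_. borel) (\<lambda>i \<omega>. (x i \<omega>, eps i \<omega>)) {1..n}"
    and integ: "\<And>i j. i \<in> {1..n} \<Longrightarrow>
                  integrable M (\<lambda>\<omega>. (x i \<omega> $ j) ^ 4 * (eps i \<omega>) ^ 4)"
  shows "measure M {\<omega> \<in> space M.
           (MAX j. \<bar>emp_avg n (\<lambda>i \<omega>. (x i \<omega> $ j)\<^sup>2 * (eps i \<omega>)\<^sup>2) \<omega>
                    - avg_expect M n (\<lambda>i \<omega>. (x i \<omega> $ j)\<^sup>2 * (eps i \<omega>)\<^sup>2)\<bar>)
           \<le> max (4 * sqrt (2 * ln (2 * real CARD('p) / \<tau>) / real n *
                     quantile M (\<lambda>\<omega>. MAX j. emp_avg n (\<lambda>i \<omega>. (x i \<omega> $ j) ^ 4 * (eps i \<omega>) ^ 4) \<omega>)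
                       (1 - \<tau>)))
                  (2 * (MAX j. sqrt (2 * avg_expect M n (\<lambda>i \<omega>. (x i \<omega> $ j) ^ 4 * (eps i \<omega>) ^ 4)
                                      / real n)))}
         \<ge> 1 - 8 * \<tau>"
proof -
  interpret prob_space M by (rule assms(1))
  show ?thesis
  proof (cases "1/8 \<le> \<tau>")
    case True
    show ?thesis by (rule order_trans[OF _ measure_nonneg]) (use True in simp)
  next
    case False
    then have tau8: "\<tau> < 1/8" by simp
    define p where "p = real CARD('p)"
    have p1: "1 \<le> p" unfolding p_def by simp
    define \<xi> where "\<xi> = (\<lambda>i \<omega>. (x i \<omega>, eps i \<omega>))"
    define I where "I = {1..n}"
    have cardI: "card I = n" unfolding I_def by simp
    have I: "finite I" "I \<noteq> {}" unfolding I_def using assms(2) by auto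
    define g where "g j = (\<lambda>b::(real^'p) \<times> real. (fst b $ j)^2 * (snd b)^2)" for j
    have gm: "g j \<in> borel_measurable borel" for j
      unfolding g_def by (intro borel_measurable_continuous_onI continuous_intros)
    have gpos: "0 \<le> g j b" for j b unfolding g_def by simp
    have ind: "indep_vars (\<lambda>_. borel) \<xi> I" using indep unfolding \<xi>_def I_def .
    have rv: "\<xi> i \<in> measurable M borel" if "i \<in> I" for i using ind that by (auto simp: indep_vars_def)
    have Zm: "(\<lambda>\<omega>. g j (\<xi> i \<omega>)) \<in> borel_measurable M" if "i \<in> I" for i j
      using measurable_comp[OF rv[OF that] gm] by (simp add: comp_def)
    have g4: "(x i \<omega> $ j) ^ 4 * (eps i \<omega>) ^ 4 = (g j (\<xi> i \<omega>))^2" for i j \<omega>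
      unfolding g_def \<xi>_def by (simp add: power_mult_distrib[symmetric] power_mult[symmetric])
    have g2: "(x i \<omega> $ j)\<^sup>2 * (eps i \<omega>)\<^sup>2 = g j (\<xi> i \<omega>)" for i j \<omega>
      unfolding g_def \<xi>_def by simp
    define Wm where "Wm = (\<lambda>\<omega>. MAX j. emp_avg n (\<lambda>i \<omega>. (x i \<omega> $ j) ^ 4 * (eps i \<omega>) ^ 4) \<omega>)"
    have Wm_eq: "Wm \<omega> = (MAX j. 1 / real n * (\<Sum>i\<in>I. (g j (\<xi> i \<omega>))^2))" for \<omega>
      unfolding Wm_def emp_avg_def g4 I_def ..
    have Wmm: "Wm \<in> borel_measurable M"
    proof -
      have "(\<lambda>\<omega>. MAX j. 1 / real n * (\<Sum>i\<in>I. (g j (\<xi> i \<omega>))^2)) \<in> borel_measurable M"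
        by (intro borel_measurable_Max finite_UNIV borel_measurable_times borel_measurable_const borel_measurable_sum
              borel_measurable_power Zm) simp
      moreover have "Wm = (\<lambda>\<omega>. MAX j. 1 / real n * (\<Sum>i\<in>I. (g j (\<xi> i \<omega>))^2))"
        by (rule ext) (rule Wm_eq)
      ultimately show ?thesis by simp
    qed
    have Wm0: "0 \<le> Wm \<omega>" for \<omega>
    proof -
      obtain j0 :: 'p where True by simp
      have "0 \<le> 1 / real n * (\<Sum>i\<in>I. (g j0 (\<xi> i \<omega>))^2)" by (simp add: sum_nonneg)
      also have "\<dots> \<le> Wm \<omega>" unfolding Wm_eq by (rule Max_ge) auto
      finally show ?thesis .
    qed
    define Q where "Q = quantile M Wm (1 - \<tau>)"
    define A where "A = {\<omega>\<in>space M. Wm \<omega> \<le> Q}"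
    have Qp: "0 \<le> Q \<and> 1 - \<tau> \<le> prob A"
      unfolding Q_def A_def by (rule quantile_prop[OF Wmm]) (use Wm0 assms(3,4) in auto)
    have Am: "A \<in> events" unfolding A_def using Wmm by measurable
    have e1: "exp (-1) \<le> 1 - \<tau>"
    proof -
      have "2 \<le> exp (1::real)" using exp_ge_add_one_self[of 1] by simp
      then have "exp (-1) \<le> 1/(2::real)" by (simp add: exp_minus field_simps)
      then show ?thesis using tau8 by simp
    qed
    have PA: "exp (-1) \<le> prob A" using Qp e1 by linarith
    define L where "L = ln (2 * p / \<tau>)"
    have L: "0 < L" unfolding L_def using p1 assms(3,4) by (simp add: field_simps)
    have eL: "exp (- L) = \<tau> / (2 * p)" unfolding L_def using p1 assms(3)
      by (simp add: exp_minus)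
    define bnd where "bnd j \<omega> \<longleftrightarrow>
      \<bar>1 / real (card I) * (\<Sum>i\<in>I. g j (\<xi> i \<omega>)) - 1 / real (card I) * (\<Sum>i\<in>I. expectation (\<lambda>\<omega>. g j (\<xi> i \<omega>)))\<bar>
       \<le> max (4 * sqrt (2 * L / real (card I) * Q))
             (2 * sqrt (2 * (1 / real (card I) * (\<Sum>i\<in>I. expectation (\<lambda>\<omega>. (g j (\<xi> i \<omega>))^2))) / real (card I)))"
      for j \<omega>
    have ex: "\<exists>U\<in>events. prob U \<le> 2 * exp (- L) \<and> (\<forall>\<omega>\<in>A - U. bnd j \<omega>)" for j
    proof -
      interpret c: coord M \<xi> I "g j"
      proof
        show "finite I" "I \<noteq> {}" by (rule I(1), rule I(2))
        show "indep_vars (\<lambda>_. borel) \<xi> I" by (rule ind)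
        show "g j \<in> borel_measurable borel" by (rule gm)
        show "\<And>v. 0 \<le> g j v" by (rule gpos)
        fix i assume "i \<in> I"
        then show "integrable M (\<lambda>\<omega>. (g j (\<xi> i \<omega>))^2)"
          using integ[of i j] unfolding g4 I_def by simp
      qed
      have onA: "(\<Sum>i\<in>I. (g j (\<xi> i \<omega>))^2) \<le> real (card I) * Q" if w: "\<omega> \<in> A" for \<omega>
      proof -
        have "1 / real n * (\<Sum>i\<in>I. (g j (\<xi> i \<omega>))^2) \<le> Wm \<omega>" unfolding Wm_eq by (rule Max_ge) auto
        also have "\<dots> \<le> Q" using w unfolding A_def by simp
        finally show ?thesis using assms(2) unfolding cardI by (simp add: field_simps)
      qed
      show ?thesis unfolding bnd_def by (rule c.coord_main[OF Am PA _ L onA]) (use Qp in simp)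
    qed
    then obtain U where U: "\<And>j. U j \<in> events" "\<And>j. prob (U j) \<le> 2 * exp (- L)"
      "\<And>j \<omega>. \<omega> \<in> A - U j \<Longrightarrow> bnd j \<omega>"
      by metis
    define Bad where "Bad = (space M - A) \<union> (\<Union>j. U j)"
    have Badm: "Bad \<in> events" unfolding Bad_def using Am U(1) by auto
    have "prob Bad \<le> prob (space M - A) + prob (\<Union>j. U j)"
      unfolding Bad_def by (rule measure_Un_le) (use Am U(1) in auto)
    also have "prob (\<Union>j. U j) \<le> (\<Sum>j\<in>UNIV. prob (U j))"
      by (rule measure_UNION_le) (use U(1) in auto)
    also have "\<dots> \<le> (\<Sum>j\<in>(UNIV::'p set). 2 * exp (- L))" by (intro sum_mono U(2))
    also have "\<dots> = \<tau>" unfolding eL using p1 unfolding p_def by simp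
    also have "prob (space M - A) = 1 - prob A" by (rule prob_compl[OF Am])
    finally have PBad: "prob Bad \<le> 2 * \<tau>" using Qp by simp
    define R where "R = max (4 * sqrt (2 * ln (2 * real CARD('p) / \<tau>) / real n *
                     quantile M (\<lambda>\<omega>. MAX j. emp_avg n (\<lambda>i \<omega>. (x i \<omega> $ j) ^ 4 * (eps i \<omega>) ^ 4) \<omega>)
                       (1 - \<tau>)))
                  (2 * (MAX j. sqrt (2 * avg_expect M n (\<lambda>i \<omega>. (x i \<omega> $ j) ^ 4 * (eps i \<omega>) ^ 4)
                                      / real n)))"
    define F where "F = (\<lambda>\<omega>. MAX j. \<bar>emp_avg n (\<lambda>i \<omega>. (x i \<omega> $ j)\<^sup>2 * (eps i \<omega>)\<^sup>2) \<omega>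
                    - avg_expect M n (\<lambda>i \<omega>. (x i \<omega> $ j)\<^sup>2 * (eps i \<omega>)\<^sup>2)\<bar>)"
    have F_eq: "F \<omega> = (MAX j. \<bar>1 / real (card I) * (\<Sum>i\<in>I. g j (\<xi> i \<omega>))
       - 1 / real (card I) * (\<Sum>i\<in>I. expectation (\<lambda>\<omega>. g j (\<xi> i \<omega>)))\<bar>)" for \<omega>
      unfolding F_def emp_avg_def avg_expect_def g2 cardI by (simp add: I_def)
    have Fm: "F \<in> borel_measurable M"
    proof -
      have "(\<lambda>\<omega>. MAX j. \<bar>1 / real (card I) * (\<Sum>i\<in>I. g j (\<xi> i \<omega>))
         - 1 / real (card I) * (\<Sum>i\<in>I. expectation (\<lambda>\<omega>. g j (\<xi> i \<omega>)))\<bar>) \<in> borel_measurable M"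
        by (intro borel_measurable_Max finite_UNIV borel_measurable_abs borel_measurable_diff
              borel_measurable_times borel_measurable_const borel_measurable_sum borel_measurable_const Zm) simp
      moreover have "F = (\<lambda>\<omega>. MAX j. \<bar>1 / real (card I) * (\<Sum>i\<in>I. g j (\<xi> i \<omega>))
         - 1 / real (card I) * (\<Sum>i\<in>I. expectation (\<lambda>\<omega>. g j (\<xi> i \<omega>)))\<bar>)"
        by (rule ext) (rule F_eq)
      ultimately show ?thesis by simp
    qed
    have R_eq: "R = max (4 * sqrt (2 * L / real (card I) * Q))
         (2 * (MAX j. sqrt (2 * (1 / real (card I) * (\<Sum>i\<in>I. expectation (\<lambda>\<omega>. (g j (\<xi> i \<omega>))^2))) / real (card I))))"
      unfolding R_def L_def p_def Q_def Wm_def avg_expect_def g4 cardI by (simp add: I_def)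
    have sub: "space M - Bad \<subseteq> {\<omega>\<in>space M. F \<omega> \<le> R}"
    proof
      fix \<omega> assume w: "\<omega> \<in> space M - Bad"
      then have wA: "\<omega> \<in> A" and wU: "\<And>j. \<omega> \<notin> U j" unfolding Bad_def by auto
      have "F \<omega> \<le> R" unfolding F_eq
      proof (subst Max_le_iff, simp, simp, clarify)
        fix j
        have "bnd j \<omega>" using U(3)[of \<omega> j] wA wU by auto
        moreover have "sqrt (2 * (1 / real (card I) * (\<Sum>i\<in>I. expectation (\<lambda>\<omega>. (g j (\<xi> i \<omega>))^2))) / real (card I))
             \<le> (MAX j. sqrt (2 * (1 / real (card I) * (\<Sum>i\<in>I. expectation (\<lambda>\<omega>. (g j (\<xi> i \<omega>))^2))) / real (card I)))"
          by (rule Max_ge) auto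
        ultimately show "\<bar>1 / real (card I) * (\<Sum>i\<in>I. g j (\<xi> i \<omega>))
            - 1 / real (card I) * (\<Sum>i\<in>I. expectation (\<lambda>\<omega>. g j (\<xi> i \<omega>)))\<bar> \<le> R"
          unfolding bnd_def R_eq by linarith
      qed
      then show "\<omega> \<in> {\<omega>\<in>space M. F \<omega> \<le> R}" using w by simp
    qed
    have Sm: "{\<omega>\<in>space M. F \<omega> \<le> R} \<in> events" using Fm by measurable
    have "1 - 2 * \<tau> \<le> prob (space M - Bad)" using prob_compl[OF Badm] PBad by simp
    also have "\<dots> \<le> prob {\<omega>\<in>space M. F \<omega> \<le> R}" by (rule finite_measure_mono[OF sub Sm])
    finally have "1 - 8 * \<tau> \<le> prob {\<omega>\<in>space M. F \<omega> \<le> R}" using assms(3) by simp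
    then show ?thesis unfolding F_def R_def .
  qed
qed


end
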